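(* Let $(X_t)_{t\in[0,1]}$ be a centered process as in the context, with KL expansion $X_t=\sum_{k\ge1}Z_ke_k(t)$, and assume that the coefficients $(Z_k)_{k\ge1}$ are mutually independent and that each $Z_k$ is sub-Gaussian with mean $0$ and parameter $\sqrt{\lambda_k}$. Let $c_g\in\mathbb R$, $K_g\ge0$, and for each $t\in[0,1]$ let $g_t:\mathbb R\to\mathbb R$ satisfy $g_t(x)-g_t(y)\le\max\big(|e^{c_gx}-e^{c_gy}|,\,K_g|x-y|\big)$ for all $x,y$ (the same constants for all $t$). Define $S_t=g_t(X_t)$ and, for $\epsilon>0$, $X'_t=\sum_{k=1}^{L_X(\epsilon)}Z_ke_k(t)$ and $S'_t=g_t(X'_t)$. Then there is a constant $C_2$, independent of $t$ and $\epsilon$, such that $$\mathbb E\big[(S_t-S'_t)^2\big]\le C_2\epsilon^2\qquad\text{for all }t\in[0,1]\text{ and all }\epsilon\in(0,1].$$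
   Context: Standing setup: $(X_t)_{t\in[0,1]}$ is a centered stochastic process with $\mathbb E[X_t^2]<\infty$ whose covariance $k_X(s,t)=\mathbb E[X_sX_t]$ is continuous on $[0,1]^2$. Let $\mathcal K$ be the integral operator $(\mathcal Kf)(t)=\int_0^1k_X(s,t)f(s)\,ds$ on $L^2([0,1])$, with orthonormal eigenfunctions $(e_k)_{k\ge1}$ and eigenvalues $\lambda_1\ge\lambda_2\ge\dots\ge0$. The Karhunen–Loève (KL) expansion is $X_t=\sum_{k\ge1}Z_ke_k(t)$ with $Z_k=\int_0^1X_te_k(t)\,dt$, converging in $L^2(\mathbb P)$ uniformly in $t$; the $Z_k$ are centered and uncorrelated with $\mathbb E[Z_k^2]=\lambda_k$. The truncation index $L_X(\epsilon)$ is the smallest natural number $L$ such that $\mathbb E\big[(\sum_{k=1}^{L}Z_ke_k(t)-X_t)^2\big]\le\epsilon^2$ for all $t\in[0,1]$. A real random variable $W$ with mean $m$ is sub-Gaussian with parameter $s\ge0$ if $\mathbb E[\exp(\theta(W-m))]\le\exp(\theta^2s^2/2)$ for all $\theta\in\mathbb R$. *)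

theory Defs
  imports "HOL-Probability.Probability"
begin

definition cov_fun :: "'a measure \<Rightarrow> (real \<Rightarrow> 'a \<Rightarrow> real) \<Rightarrow> real \<Rightarrow> real \<Rightarrow> real" where
  "cov_fun M X s t = (\<integral>\<omega>. X s \<omega> * X t \<omega> \<partial>M)"

definition KL_coeff :: "(real \<Rightarrow> 'a \<Rightarrow> real) \<Rightarrow> (nat \<Rightarrow> real \<Rightarrow> real) \<Rightarrow> nat \<Rightarrow> 'a \<Rightarrow> real" where
  "KL_coeff X e k \<omega> = (LINT t:{0..1}|lborel. X t \<omega> * e k t)"

definition KL_trunc :: "(real \<Rightarrow> 'a \<Rightarrow> real) \<Rightarrow> (nat \<Rightarrow> real \<Rightarrow> real) \<Rightarrow> nat \<Rightarrow> real \<Rightarrow> 'a \<Rightarrow> real" where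
  "KL_trunc X e L t \<omega> = (\<Sum>k=1..L. KL_coeff X e k \<omega> * e k t)"

definition trunc_index :: "'a measure \<Rightarrow> (real \<Rightarrow> 'a \<Rightarrow> real) \<Rightarrow> (nat \<Rightarrow> real \<Rightarrow> real) \<Rightarrow> real \<Rightarrow> nat" where
  "trunc_index M X e \<epsilon> = (LEAST L. \<forall>t\<in>{0..1}.
      (\<integral>\<omega>. (KL_trunc X e L t \<omega> - X t \<omega>)\<^sup>2 \<partial>M) \<le> \<epsilon>\<^sup>2)"

definition sub_gaussian :: "'a measure \<Rightarrow> ('a \<Rightarrow> real) \<Rightarrow> real \<Rightarrow> real \<Rightarrow> bool" where
  "sub_gaussian M W m s \<longleftrightarrow> s \<ge> 0 \<and>
     (\<forall>\<theta>::real. (\<integral>\<^sup>+\<omega>. ennreal (exp (\<theta> * (W \<omega> - m))) \<partial>M) \<le> ennreal (exp (\<theta>\<^sup>2 * s\<^sup>2 / 2)))"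

end

theory Submission
  imports Defs
begin


lemma sq_le_exp: "(x::real)\<^sup>2 \<le> 2 * (exp x + exp (- x))"
proof -
  have a: "y\<^sup>2 \<le> 2 * exp y" if "y \<ge> 0" for y :: real
    using exp_lower_Taylor_quadratic[OF that] that by (simp add: zero_le_power2)
  show ?thesis
  proof (cases "x \<ge> 0")
    case True with a[OF True] exp_gt_zero[of "-x"] show ?thesis unfolding distrib_left by linarith
  next
    case False
    then have "(-x)\<^sup>2 \<le> 2 * exp (-x)" using a[of "-x"] by simp
    then show ?thesis using exp_gt_zero[of x] unfolding distrib_left power2_minus by linarith
  qed
qed

lemma abs_le_exp: "\<bar>x::real\<bar> \<le> exp x + exp (- x)"
  using exp_ge_add_one_self[of x] exp_ge_add_one_self[of "-x"] exp_gt_zero[of x] exp_gt_zero[of "-x"]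
  by linarith

lemma pow4_le_exp: "(x::real)^4 \<le> 64 * (exp x + exp (- x))"
proof -
  have a: "y^4 \<le> 64 * exp y" if "y \<ge> 0" for y :: real
  proof -
    have "1 + y/2 + (y/2)\<^sup>2 / 2 \<le> exp (y/2)" using exp_lower_Taylor_quadratic[of "y/2"] that by simp
    hence b: "y\<^sup>2/8 \<le> exp (y/2)" using that by (simp add: power2_eq_square)
    have "(y\<^sup>2/8)\<^sup>2 \<le> (exp (y/2))\<^sup>2" using b that by (intro power_mono) auto
    also have "(exp (y/2))\<^sup>2 = exp y" by (simp add: power2_eq_square flip: exp_add)
    finally show ?thesis by (simp add: power2_eq_square power4_eq_xxxx)
  qed
  show ?thesis
  proof (cases "x \<ge> 0")
    case True with a[OF True] exp_gt_zero[of "-x"] show ?thesis unfolding distrib_left by linarith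
  next
    case False
    then have "(-x)^4 \<le> 64 * exp (-x)" using a[of "-x"] by simp
    moreover have "(-x)^4 = x^4" by (simp add: power4_eq_xxxx)
    ultimately show ?thesis using exp_gt_zero[of x] unfolding distrib_left by linarith
  qed
qed

lemma exp_diff_bound: "\<bar>exp (a::real) - exp b\<bar> \<le> \<bar>a - b\<bar> * max (exp a) (exp b)"
proof -
  have *: "exp a - exp b \<le> (a - b) * exp a" if "b \<le> a" for a b :: real
  proof -
    have "exp b = exp a * exp (b - a)" by (simp flip: exp_add)
    moreover have "1 + (b - a) \<le> exp (b - a)" by simp
    ultimately have "exp b \<ge> exp a * (1 + (b - a))" by (simp add: mult_left_mono)
    thus ?thesis by (simp add: algebra_simps)
  qed
  show ?thesis
  proof (cases "b \<le> a")
    case True with *[OF True] show ?thesis by (auto simp: abs_if max_def)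
  next
    case False with *[of a b] show ?thesis by (auto simp: abs_if max_def)
  qed
qed


lemma abs_mult_le_weighted:
  fixes a b \<eta> :: real assumes "\<eta> > 0"
  shows "\<bar>a * b\<bar> \<le> (a\<^sup>2 / \<eta> + \<eta> * b\<^sup>2) / 2"
proof -
  have "0 \<le> (\<bar>a\<bar> - \<eta> * \<bar>b\<bar>)\<^sup>2" by simp
  then have "2 * \<eta> * (\<bar>a\<bar> * \<bar>b\<bar>) \<le> \<bar>a\<bar> * \<bar>a\<bar> + \<eta> * \<eta> * (\<bar>b\<bar> * \<bar>b\<bar>)"
    by (simp add: power2_eq_square algebra_simps)
  moreover have "\<bar>a\<bar> * \<bar>a\<bar> = a\<^sup>2" "\<bar>b\<bar> * \<bar>b\<bar> = b\<^sup>2" by (simp_all add: power2_eq_square)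
  ultimately have "\<eta> * (2 * \<bar>a * b\<bar>) \<le> \<eta> * (a\<^sup>2 / \<eta> + \<eta> * b\<^sup>2)"
    using assms by (simp add: abs_mult algebra_simps)
  then have "2 * \<bar>a * b\<bar> \<le> a\<^sup>2 / \<eta> + \<eta> * b\<^sup>2"
    using assms by (simp add: mult_le_cancel_left_pos)
  then show ?thesis by simp
qed

lemma abs_mult_le_sq: "\<bar>(a::real) * b\<bar> \<le> a\<^sup>2 + b\<^sup>2"
  using abs_mult_le_weighted[of 1 a b] by (simp add: zero_le_power2)

lemma sq_add_le: "((a::real) + b)\<^sup>2 \<le> 2 * a\<^sup>2 + 2 * b\<^sup>2"
proof -
  have "0 \<le> (a - b)\<^sup>2" by simp
  then show ?thesis by (simp add: power2_eq_square algebra_simps)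
qed


lemma small_imp_zero:
  fixes x c :: real
  assumes "\<And>\<gamma>. \<gamma> > 0 \<Longrightarrow> \<bar>x\<bar> \<le> \<gamma> * c" "c \<ge> 0"
  shows "x = 0"
proof (rule ccontr)
  assume "x \<noteq> 0"
  then have xp: "\<bar>x\<bar> > 0" by simp
  have "\<bar>x\<bar> \<le> (\<bar>x\<bar> / (c + 1)) * c" using assms(1)[of "\<bar>x\<bar> / (c + 1)"] xp assms(2) by simp
  also have "\<dots> < \<bar>x\<bar>" using xp assms(2) by (simp add: field_simps)
  finally show False by simp
qed




locale KL = prob_space M for M :: "'a measure" +
  fixes X :: "real \<Rightarrow> 'a \<Rightarrow> real" and e :: "nat \<Rightarrow> real \<Rightarrow> real" and lam :: "nat \<Rightarrow> real"
  assumes X_meas: "\<And>t. t \<in> {0..1} \<Longrightarrow> X t \<in> borel_measurable M"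
    and X_L2: "\<And>t. t \<in> {0..1} \<Longrightarrow> integrable M (\<lambda>\<omega>. (X t \<omega>)\<^sup>2)"
    and cov_cont: "continuous_on ({0..1} \<times> {0..1}) (\<lambda>(s, t). cov_fun M X s t)"
    and e_meas: "\<And>k. k \<ge> 1 \<Longrightarrow> e k \<in> borel_measurable lborel"
    and e_L2: "\<And>k. k \<ge> 1 \<Longrightarrow> set_integrable lborel {0..1::real} (\<lambda>t. (e k t)\<^sup>2)"
    and e_orthonormal: "\<And>j k. j \<ge> 1 \<Longrightarrow> k \<ge> 1 \<Longrightarrow>
        (LINT t:{0..1}|lborel. e j t * e k t) = (if j = k then 1 else 0)"
    and e_eigen: "\<And>k t. k \<ge> 1 \<Longrightarrow> t \<in> {0..1} \<Longrightarrow>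
        (LINT s:{0..1}|lborel. cov_fun M X s t * e k s) = lam k * e k t"
    and KL_conv: "\<And>\<delta>. \<delta> > 0 \<Longrightarrow> \<exists>N. \<forall>n\<ge>N. \<forall>t\<in>{0..1}.
        (\<integral>\<omega>. (KL_trunc X e n t \<omega> - X t \<omega>)\<^sup>2 \<partial>M) \<le> \<delta>"
    and Z_indep: "indep_vars (\<lambda>_. borel) (KL_coeff X e) {1..}"
    and Z_mean: "\<And>k. k \<ge> 1 \<Longrightarrow> (\<integral>\<omega>. KL_coeff X e k \<omega> \<partial>M) = 0"
    and Z_subg: "\<And>k. k \<ge> 1 \<Longrightarrow> sub_gaussian M (KL_coeff X e k) 0 (sqrt (lam k))"
begin

abbreviation "Z \<equiv> KL_coeff X e"

lemma Z_rv: "k \<ge> 1 \<Longrightarrow> Z k \<in> borel_measurable M"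
  using Z_indep unfolding indep_vars_def by auto

lemma lam_nn: "k \<ge> 1 \<Longrightarrow> lam k \<ge> 0"
proof (rule ccontr)
  assume k: "k \<ge> 1" and "\<not> lam k \<ge> 0"
  then have "sqrt (lam k) < 0" by simp
  with Z_subg[OF k] show False unfolding sub_gaussian_def by simp
qed

lemma Z_mgf: "k \<ge> 1 \<Longrightarrow> (\<integral>\<^sup>+\<omega>. ennreal (exp (\<theta> * Z k \<omega>)) \<partial>M) \<le> ennreal (exp (\<theta>\<^sup>2 * lam k / 2))"
  using Z_subg[of k] lam_nn[of k] unfolding sub_gaussian_def by auto

lemma Z_exp_int: assumes k: "k \<ge> 1" shows "integrable M (\<lambda>\<omega>. exp (\<theta> * Z k \<omega>))"
proof -
  have "(\<integral>\<^sup>+\<omega>. ennreal (norm (exp (\<theta> * Z k \<omega>))) \<partial>M) < \<infinity>"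
    using Z_mgf[OF k, of \<theta>] by (simp add: le_less_trans)
  then show ?thesis using Z_rv[OF k] by (subst integrable_iff_bounded) auto
qed

lemma Z_sq_int: assumes k: "k \<ge> 1" shows "integrable M (\<lambda>\<omega>. (Z k \<omega>)\<^sup>2)"
proof (rule Bochner_Integration.integrable_bound)
  show "integrable M (\<lambda>\<omega>. 2 * (exp (1 * Z k \<omega>) + exp ((-1) * Z k \<omega>)))"
    using Z_exp_int[OF k, of 1] Z_exp_int[OF k, of "-1"] by auto
  show "(\<lambda>\<omega>. (Z k \<omega>)\<^sup>2) \<in> borel_measurable M" using Z_rv[OF k] by measurable
  show "AE \<omega> in M. norm ((Z k \<omega>)\<^sup>2) \<le> norm (2 * (exp (1 * Z k \<omega>) + exp ((-1) * Z k \<omega>)))"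
    using sq_le_exp by (auto intro!: AE_I2 simp: abs_of_nonneg add_nonneg_nonneg)
qed

lemma Z_int: assumes k: "k \<ge> 1" shows "integrable M (Z k)"
proof (rule Bochner_Integration.integrable_bound)
  show "integrable M (\<lambda>\<omega>. (exp (1 * Z k \<omega>) + exp ((-1) * Z k \<omega>)))"
    using Z_exp_int[OF k, of 1] Z_exp_int[OF k, of "-1"] by auto
  show "Z k \<in> borel_measurable M" using Z_rv[OF k] by measurable
  show "AE \<omega> in M. norm (Z k \<omega>) \<le> norm ((exp (1 * Z k \<omega>) + exp ((-1) * Z k \<omega>)))"
    using abs_le_exp by (auto intro!: AE_I2 simp: abs_of_nonneg add_nonneg_nonneg)
qed

definition "v k = (\<integral>\<omega>. (Z k \<omega>)\<^sup>2 \<partial>M)"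

lemma Z_prod_int: assumes j: "j \<ge> 1" and k: "k \<ge> 1" shows "integrable M (\<lambda>\<omega>. Z j \<omega> * Z k \<omega>)"
proof (rule Bochner_Integration.integrable_bound)
  show "integrable M (\<lambda>\<omega>. (Z j \<omega>)\<^sup>2 + (Z k \<omega>)\<^sup>2)"
    using Z_sq_int[OF j] Z_sq_int[OF k] by auto
  show "(\<lambda>\<omega>. Z j \<omega> * Z k \<omega>) \<in> borel_measurable M" using Z_rv[OF j] Z_rv[OF k] by measurable
  have "\<bar>a * b\<bar> \<le> a\<^sup>2 + b\<^sup>2" for a b :: real
  proof -
    have "0 \<le> (\<bar>a\<bar> - \<bar>b\<bar>)\<^sup>2" by simp
    then have "2 * (\<bar>a\<bar> * \<bar>b\<bar>) \<le> \<bar>a\<bar> * \<bar>a\<bar> + \<bar>b\<bar> * \<bar>b\<bar>"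
      by (simp add: power2_eq_square algebra_simps)
    moreover have "0 \<le> \<bar>a\<bar> * \<bar>b\<bar>" by simp
    moreover have "\<bar>a\<bar> * \<bar>a\<bar> = a * a" "\<bar>b\<bar> * \<bar>b\<bar> = b * b" by simp_all
    ultimately show ?thesis unfolding abs_mult power2_eq_square by linarith
  qed
  then show "AE \<omega> in M. norm (Z j \<omega> * Z k \<omega>) \<le> norm ((Z j \<omega>)\<^sup>2 + (Z k \<omega>)\<^sup>2)"
    by (auto intro!: AE_I2)
qed

lemma Z_uncorr: assumes j: "j \<ge> 1" and k: "k \<ge> 1" and jk: "j \<noteq> k"
  shows "(\<integral>\<omega>. Z j \<omega> * Z k \<omega> \<partial>M) = 0"
proof -
  have ind: "indep_vars (\<lambda>_. borel) Z {j, k}"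
    by (rule indep_vars_subset[OF Z_indep]) (use j k in auto)
  have "(\<integral>\<omega>. (\<Prod>i\<in>{j,k}. Z i \<omega>) \<partial>M) = (\<Prod>i\<in>{j,k}. \<integral>\<omega>. Z i \<omega> \<partial>M)"
    by (rule indep_vars_lebesgue_integral[OF _ ind]) (use j k Z_int in auto)
  then show ?thesis using jk Z_mean[OF j] Z_mean[OF k] by simp
qed

lemma Z_corr: "j \<ge> 1 \<Longrightarrow> k \<ge> 1 \<Longrightarrow> (\<integral>\<omega>. Z j \<omega> * Z k \<omega> \<partial>M) = (if j = k then v j else 0)"
  using Z_uncorr[of j k] by (auto simp: v_def power2_eq_square)

lemma sum_cross:
  assumes F: "finite F" "F \<subseteq> {1..}"
  shows "integrable M (\<lambda>\<omega>. (\<Sum>i\<in>F. a i * Z i \<omega>) * (\<Sum>j\<in>F. b j * Z j \<omega>))" (is ?A)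
    and "(\<integral>\<omega>. (\<Sum>i\<in>F. a i * Z i \<omega>) * (\<Sum>j\<in>F. b j * Z j \<omega>) \<partial>M) = (\<Sum>i\<in>F. a i * b i * v i)" (is ?B)
proof -
  have eq: "(\<Sum>i\<in>F. a i * Z i \<omega>) * (\<Sum>j\<in>F. b j * Z j \<omega>) = (\<Sum>i\<in>F. \<Sum>j\<in>F. a i * b j * (Z i \<omega> * Z j \<omega>))" for \<omega>
    by (simp add: sum_product algebra_simps)
  have int: "integrable M (\<lambda>\<omega>. a i * b j * (Z i \<omega> * Z j \<omega>))" if "i \<in> F" "j \<in> F" for i j
    using Z_prod_int[of i j] that F by auto
  show ?A unfolding eq using int by (intro Bochner_Integration.integrable_sum) auto
  have "(\<integral>\<omega>. (\<Sum>i\<in>F. a i * Z i \<omega>) * (\<Sum>j\<in>F. b j * Z j \<omega>) \<partial>M)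
      = (\<Sum>i\<in>F. \<Sum>j\<in>F. a i * b j * (\<integral>\<omega>. Z i \<omega> * Z j \<omega> \<partial>M))"
    unfolding eq using int
    by (simp add: Bochner_Integration.integral_sum Bochner_Integration.integrable_sum)
  also have "\<dots> = (\<Sum>i\<in>F. \<Sum>j\<in>F. if i = j then a i * b i * v i else 0)"
    using F by (intro sum.cong refl) (auto simp: Z_corr subset_iff)
  also have "\<dots> = (\<Sum>i\<in>F. a i * b i * v i)"
    using F by (simp add: sum.delta)
  finally show ?B .
qed

lemma sum_mgf:
  assumes F: "finite F" "F \<subseteq> {1..}"
  shows "(\<integral>\<^sup>+\<omega>. ennreal (exp (\<theta> * (\<Sum>k\<in>F. a k * Z k \<omega>))) \<partial>M)
     \<le> ennreal (exp (\<theta>\<^sup>2 * (\<Sum>k\<in>F. (a k)\<^sup>2 * lam k) / 2))"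
proof -
  have ind: "indep_vars (\<lambda>_. borel) Z F" by (rule indep_vars_subset[OF Z_indep F(2)])
  have "(\<integral>\<^sup>+\<omega>. ennreal (exp (\<theta> * (\<Sum>k\<in>F. a k * Z k \<omega>))) \<partial>M)
      = (\<integral>\<^sup>+\<omega>. (\<Prod>k\<in>F. ennreal (exp ((\<theta> * a k) * Z k \<omega>))) \<partial>M)"
    by (intro nn_integral_cong)
       (simp add: sum_distrib_left exp_sum F prod_ennreal mult.assoc)
  also have "\<dots> = (\<Prod>k\<in>F. \<integral>\<^sup>+\<omega>. ennreal (exp ((\<theta> * a k) * Z k \<omega>)) \<partial>M)"
    by (intro indep_vars_nn_integral F indep_vars_compose2[OF ind]) auto
  also have "\<dots> \<le> (\<Prod>k\<in>F. ennreal (exp ((\<theta> * a k)\<^sup>2 * lam k / 2)))"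
    by (intro prod_mono_ennreal Z_mgf) (use F in auto)
  also have "\<dots> = ennreal (\<Prod>k\<in>F. exp ((\<theta> * a k)\<^sup>2 * lam k / 2))"
    by (simp add: prod_ennreal)
  also have "(\<Prod>k\<in>F. exp ((\<theta> * a k)\<^sup>2 * lam k / 2)) = exp (\<theta>\<^sup>2 * (\<Sum>k\<in>F. (a k)\<^sup>2 * lam k) / 2)"
    by (simp add: exp_sum[OF F(1), symmetric] sum_distrib_left sum_divide_distrib power_mult_distrib mult.assoc)
  finally show ?thesis .
qed

end



context KL begin

definition L2 :: "('a \<Rightarrow> real) \<Rightarrow> bool" where "L2 f \<longleftrightarrow> f \<in> borel_measurable M \<and> integrable M (\<lambda>x. (f x)\<^sup>2)"

lemma L2_meas: "L2 f \<Longrightarrow> f \<in> borel_measurable M" by (simp add: L2_def)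
lemma L2_sqint: "L2 f \<Longrightarrow> integrable M (\<lambda>x. (f x)\<^sup>2)" by (simp add: L2_def)

lemma L2_prod: assumes "L2 f" "L2 g" shows "integrable M (\<lambda>x. f x * g x)"
proof (rule Bochner_Integration.integrable_bound)
  show "integrable M (\<lambda>x. (f x)\<^sup>2 + (g x)\<^sup>2)" using assms by (auto simp: L2_def)
  show "(\<lambda>x. f x * g x) \<in> borel_measurable M" using assms by (auto simp: L2_def)
  show "AE x in M. norm (f x * g x) \<le> norm ((f x)\<^sup>2 + (g x)\<^sup>2)"
    using abs_mult_le_sq by (auto intro!: AE_I2)
qed

lemma L2_add: assumes "L2 f" "L2 g" shows "L2 (\<lambda>x. f x + g x)"
proof -
  have "integrable M (\<lambda>x. (f x)\<^sup>2 + (g x)\<^sup>2 + 2 * (f x * g x))"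
    using assms L2_prod[OF assms] by (auto simp: L2_def)
  moreover have "(\<lambda>x. f x + g x) \<in> borel_measurable M" using assms by (auto simp: L2_def)
  ultimately show ?thesis by (simp add: L2_def power2_sum mult.assoc)
qed

lemma L2_cmult: assumes "L2 f" shows "L2 (\<lambda>x. c * f x)"
proof -
  have "integrable M (\<lambda>x. c\<^sup>2 * (f x)\<^sup>2)" using assms by (auto simp: L2_def)
  moreover have "(\<lambda>x. c * f x) \<in> borel_measurable M" using assms by (auto simp: L2_def)
  ultimately show ?thesis by (simp add: L2_def power_mult_distrib)
qed

lemma L2_diff: assumes "L2 f" "L2 g" shows "L2 (\<lambda>x. f x - g x)"
  using L2_add[OF assms(1) L2_cmult[OF assms(2), of "-1"]] by simp

lemma L2_sum: "finite F \<Longrightarrow> (\<And>i. i \<in> F \<Longrightarrow> L2 (f i)) \<Longrightarrow> L2 (\<lambda>x. \<Sum>i\<in>F. f i x)"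
proof (induction F rule: finite_induct)
  case empty then show ?case by (simp add: L2_def)
next
  case (insert a F) then show ?case by (simp add: L2_add)
qed

lemma L2_Z: "k \<ge> 1 \<Longrightarrow> L2 (Z k)" using Z_rv Z_sq_int by (simp add: L2_def)
lemma L2_X: "t \<in> {0..1} \<Longrightarrow> L2 (X t)" using X_meas X_L2 by (simp add: L2_def)

lemma trunc_eq: "KL_trunc X e n t \<omega> = (\<Sum>k\<in>{1..n}. e k t * Z k \<omega>)"
  by (simp add: KL_trunc_def mult.commute)

lemma L2_trunc: "L2 (KL_trunc X e n t)"
proof -
  have "L2 (\<lambda>\<omega>. \<Sum>k\<in>{1..n}. e k t * Z k \<omega>)"
    by (intro L2_sum L2_cmult L2_Z) auto
  then show ?thesis by (simp add: trunc_eq[abs_def])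
qed

lemma L2_weighted:
  assumes "L2 f" "L2 g" "\<eta> > 0"
  shows "\<bar>\<integral>x. f x * g x \<partial>M\<bar> \<le> ((\<integral>x. (f x)\<^sup>2 \<partial>M) / \<eta> + \<eta> * (\<integral>x. (g x)\<^sup>2 \<partial>M)) / 2"
proof -
  have "\<bar>\<integral>x. f x * g x \<partial>M\<bar> \<le> (\<integral>x. \<bar>f x * g x\<bar> \<partial>M)"
    using integral_norm_bound[of M "\<lambda>x. f x * g x"] by simp
  also have "\<dots> \<le> (\<integral>x. ((f x)\<^sup>2 / \<eta> + \<eta> * (g x)\<^sup>2) / 2 \<partial>M)"
    using assms by (intro integral_mono abs_mult_le_weighted)
      (auto intro!: L2_prod simp: L2_def)
  also have "\<dots> = ((\<integral>x. (f x)\<^sup>2 \<partial>M) / \<eta> + \<eta> * (\<integral>x. (g x)\<^sup>2 \<partial>M)) / 2"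
    using assms by (simp add: L2_def)
  finally show ?thesis .
qed

lemma L2_sq_add_le:
  assumes "L2 f" "L2 g"
  shows "(\<integral>x. (f x + g x)\<^sup>2 \<partial>M) \<le> 2 * (\<integral>x. (f x)\<^sup>2 \<partial>M) + 2 * (\<integral>x. (g x)\<^sup>2 \<partial>M)"
proof -
  have "(\<integral>x. (f x + g x)\<^sup>2 \<partial>M) \<le> (\<integral>x. 2 * (f x)\<^sup>2 + 2 * (g x)\<^sup>2 \<partial>M)"
    using assms L2_add[OF assms] by (intro integral_mono sq_add_le) (auto simp: L2_def)
  also have "\<dots> = 2 * (\<integral>x. (f x)\<^sup>2 \<partial>M) + 2 * (\<integral>x. (g x)\<^sup>2 \<partial>M)"
    using assms by (simp add: L2_def)
  finally show ?thesis .
qed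

end



context KL begin

lemma cov_bounded: obtains B where "B \<ge> 0" "\<And>s t. s \<in> {0..1} \<Longrightarrow> t \<in> {0..1} \<Longrightarrow> \<bar>cov_fun M X s t\<bar> \<le> B"
proof -
  have "compact ((\<lambda>(s, t). cov_fun M X s t) ` ({0..1} \<times> {0..1}))"
    by (intro compact_continuous_image cov_cont compact_Times) auto
  then have "bounded ((\<lambda>(s, t). cov_fun M X s t) ` ({0..1} \<times> {0..1}))"
    by (rule compact_imp_bounded)
  then obtain B where B: "\<And>y. y \<in> (\<lambda>(s, t). cov_fun M X s t) ` ({0..1} \<times> {0..1}) \<Longrightarrow> norm y \<le> B"
    unfolding bounded_iff by blast
  have "\<bar>cov_fun M X s t\<bar> \<le> B" if "s \<in> {0..1}" "t \<in> {0..1}" for s t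
    using B[of "cov_fun M X s t"] that by force
  moreover have "B \<ge> 0" using B[of "cov_fun M X 0 0"] by force
  ultimately show ?thesis using that by blast
qed

lemma cov_diag: "cov_fun M X s s = (\<integral>\<omega>. (X s \<omega>)\<^sup>2 \<partial>M)"
  by (simp add: cov_fun_def power2_eq_square)

lemma cov_cont_s: assumes t: "t \<in> {0..1}" shows "continuous_on {0..1} (\<lambda>s. cov_fun M X s t)"
proof -
  have "continuous_on {0..1} (\<lambda>s. (\<lambda>(s, t). cov_fun M X s t) (s, t))"
    by (rule continuous_on_compose2[OF cov_cont continuous_on_Pair[OF continuous_on_id continuous_on_const]])
       (use t in auto)
  then show ?thesis by simp
qed

lemma e_int: assumes k: "k \<ge> 1" shows "integrable lborel (\<lambda>s. indicator {0..1::real} s * e k s)"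
proof (rule Bochner_Integration.integrable_bound)
  have "integrable lborel (\<lambda>s. indicator {0..1::real} s * (e k s)\<^sup>2)"
    using e_L2[OF k] by (simp add: set_integrable_def)
  then show "integrable lborel (\<lambda>s. indicator {0..1::real} s * (e k s)\<^sup>2 + indicator {0..1::real} s)"
    by (intro Bochner_Integration.integrable_add) auto
  show "(\<lambda>s. indicator {0..1::real} s * e k s) \<in> borel_measurable lborel"
    using e_meas[OF k] by measurable
  show "AE s in lborel. norm (indicator {0..1::real} s * e k s) \<le> norm (indicator {0..1::real} s * (e k s)\<^sup>2 + indicator {0..1::real} s)"
    using abs_mult_le_sq[of "e k _" 1] by (auto intro!: AE_I2 simp: indicator_def)
qed

lemma e_prod_int: assumes j: "j \<ge> 1" and k: "k \<ge> 1"
  shows "integrable lborel (\<lambda>s. indicator {0..1::real} s * (e j s * e k s))"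
proof (rule Bochner_Integration.integrable_bound)
  have "integrable lborel (\<lambda>s. indicator {0..1::real} s * (e j s)\<^sup>2)"
    "integrable lborel (\<lambda>s. indicator {0..1::real} s * (e k s)\<^sup>2)"
    using e_L2[OF j] e_L2[OF k] by (simp_all add: set_integrable_def)
  then show "integrable lborel (\<lambda>s. indicator {0..1::real} s * (e j s)\<^sup>2 + indicator {0..1::real} s * (e k s)\<^sup>2)"
    by (intro Bochner_Integration.integrable_add) auto
  show "(\<lambda>s. indicator {0..1::real} s * (e j s * e k s)) \<in> borel_measurable lborel"
    using e_meas[OF j] e_meas[OF k] by measurable
  show "AE s in lborel. norm (indicator {0..1::real} s * (e j s * e k s)) \<le> norm (indicator {0..1::real} s * (e j s)\<^sup>2 + indicator {0..1::real} s * (e k s)\<^sup>2)"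
    using abs_mult_le_sq[of "e j _" "e k _"] by (auto intro!: AE_I2 simp: indicator_def)
qed

lemma e_orth': "j \<ge> 1 \<Longrightarrow> k \<ge> 1 \<Longrightarrow> (\<integral>s. indicator {0..1::real} s * (e j s * e k s) \<partial>lborel) = (if j = k then 1 else 0)"
  using e_orthonormal[of j k] by (simp add: set_lebesgue_integral_def)

lemma cov_meas: assumes t: "t \<in> {0..1}"
  shows "(\<lambda>s. indicator {0..1::real} s * cov_fun M X s t) \<in> borel_measurable lborel"
  using borel_measurable_continuous_on_indicator[OF _ cov_cont_s[OF t]] by simp

lemma cov_e_int: assumes k: "k \<ge> 1" and t: "t \<in> {0..1}"
  shows "integrable lborel (\<lambda>s. indicator {0..1::real} s * (cov_fun M X s t * e k s))"
proof -
  obtain B where B: "B \<ge> 0" "\<And>s t. s \<in> {0..1} \<Longrightarrow> t \<in> {0..1} \<Longrightarrow> \<bar>cov_fun M X s t\<bar> \<le> B"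
    using cov_bounded by metis
  show ?thesis
  proof (rule Bochner_Integration.integrable_bound)
    show "integrable lborel (\<lambda>s. B * \<bar>indicator {0..1::real} s * e k s\<bar>)"
      using e_int[OF k] by auto
    have "(\<lambda>s. (indicator {0..1::real} s * cov_fun M X s t) * e k s) \<in> borel_measurable lborel"
      using cov_meas[OF t] e_meas[OF k] by measurable
    then show "(\<lambda>s. indicator {0..1::real} s * (cov_fun M X s t * e k s)) \<in> borel_measurable lborel"
      by (simp add: mult.assoc)
    show "AE s in lborel. norm (indicator {0..1::real} s * (cov_fun M X s t * e k s)) \<le> norm (B * \<bar>indicator {0..1::real} s * e k s\<bar>)"
      using B t by (auto intro!: AE_I2 simp: indicator_def abs_mult mult_right_mono)
  qed
qed

lemma eigen': "k \<ge> 1 \<Longrightarrow> t \<in> {0..1} \<Longrightarrow>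
   (\<integral>s. indicator {0..1::real} s * (cov_fun M X s t * e k s) \<partial>lborel) = lam k * e k t"
  using e_eigen[of k t] by (simp add: set_lebesgue_integral_def)

end



context KL begin

abbreviation "T \<equiv> KL_trunc X e"

lemma trunc_cross:
  "(\<integral>\<omega>. T n s \<omega> * T n t \<omega> \<partial>M) = (\<Sum>j\<in>{1..n}. e j s * e j t * v j)"
  unfolding trunc_eq by (rule sum_cross(2)) auto

lemma conv': "\<delta> > 0 \<Longrightarrow> \<exists>N. \<forall>n\<ge>N. \<forall>t\<in>{0..1}. (\<integral>\<omega>. (X t \<omega> - T n t \<omega>)\<^sup>2 \<partial>M) \<le> \<delta>"
  using KL_conv[of \<delta>] by (simp add: power2_commute)

lemma unif_approx:
  assumes t: "t \<in> {0..1}" and g: "\<gamma> > 0"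
  shows "\<exists>N. \<forall>n\<ge>N. \<forall>s\<in>{0..1}. \<bar>cov_fun M X s t - (\<Sum>j\<in>{1..n}. e j s * e j t * v j)\<bar> \<le> \<gamma>"
proof -
  obtain B where B: "B \<ge> 0" "\<And>s t. s \<in> {0..1} \<Longrightarrow> t \<in> {0..1} \<Longrightarrow> \<bar>cov_fun M X s t\<bar> \<le> B"
    using cov_bounded by metis
  define \<eta> where "\<eta> = \<gamma> / (3 * B + 2)"
  have \<eta>: "\<eta> > 0" using g B by (simp add: \<eta>_def)
  define \<delta> where "\<delta> = min 1 (\<gamma> * \<eta> / 2)"
  have \<delta>: "\<delta> > 0" "\<delta> \<le> 1" "\<delta> \<le> \<gamma> * \<eta> / 2" using g \<eta> by (auto simp: \<delta>_def)
  obtain N where N: "\<And>n t. n \<ge> N \<Longrightarrow> t \<in> {0..1} \<Longrightarrow> (\<integral>\<omega>. (X t \<omega> - T n t \<omega>)\<^sup>2 \<partial>M) \<le> \<delta>"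
    using conv'[OF \<delta>(1)] by blast
  have "\<bar>cov_fun M X s t - (\<Sum>j\<in>{1..n}. e j s * e j t * v j)\<bar> \<le> \<gamma>" if n: "n \<ge> N" and s: "s \<in> {0..1}" for n s
  proof -
    have Ls: "L2 (X s)" and Lt: "L2 (X t)" using L2_X s t by auto
    have LTs: "L2 (T n s)" and LTt: "L2 (T n t)" using L2_trunc by auto
    have L1: "L2 (\<lambda>\<omega>. X s \<omega> - T n s \<omega>)" and L2': "L2 (\<lambda>\<omega>. X t \<omega> - T n t \<omega>)"
      using L2_diff Ls Lt LTs LTt by auto
    have "cov_fun M X s t - (\<Sum>j\<in>{1..n}. e j s * e j t * v j)
        = (\<integral>\<omega>. X s \<omega> * X t \<omega> \<partial>M) - (\<integral>\<omega>. T n s \<omega> * T n t \<omega> \<partial>M)"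
      by (simp add: cov_fun_def trunc_cross)
    also have "\<dots> = (\<integral>\<omega>. X s \<omega> * X t \<omega> - T n s \<omega> * T n t \<omega> \<partial>M)"
      using L2_prod[OF Ls Lt] L2_prod[OF LTs LTt] by simp
    also have "\<dots> = (\<integral>\<omega>. (X s \<omega> - T n s \<omega>) * X t \<omega> + T n s \<omega> * (X t \<omega> - T n t \<omega>) \<partial>M)"
      by (simp add: algebra_simps)
    also have "\<dots> = (\<integral>\<omega>. (X s \<omega> - T n s \<omega>) * X t \<omega> \<partial>M) + (\<integral>\<omega>. T n s \<omega> * (X t \<omega> - T n t \<omega>) \<partial>M)"
      using L2_prod[OF L1 Lt] L2_prod[OF LTs L2'] by simp
    finally have eq: "cov_fun M X s t - (\<Sum>j\<in>{1..n}. e j s * e j t * v j) = \<dots>" .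
    have a1: "(\<integral>\<omega>. (X s \<omega> - T n s \<omega>)\<^sup>2 \<partial>M) \<le> \<delta>" "(\<integral>\<omega>. (X t \<omega> - T n t \<omega>)\<^sup>2 \<partial>M) \<le> \<delta>"
      using N n s t by auto
    have a2: "(\<integral>\<omega>. (X t \<omega>)\<^sup>2 \<partial>M) \<le> B" "(\<integral>\<omega>. (X s \<omega>)\<^sup>2 \<partial>M) \<le> B"
      using B(2)[of t t] B(2)[of s s] s t by (auto simp: cov_diag)
    have "(\<integral>\<omega>. (T n s \<omega>)\<^sup>2 \<partial>M) = (\<integral>\<omega>. ((T n s \<omega> - X s \<omega>) + X s \<omega>)\<^sup>2 \<partial>M)" by simp
    also have "\<dots> \<le> 2 * (\<integral>\<omega>. (T n s \<omega> - X s \<omega>)\<^sup>2 \<partial>M) + 2 * (\<integral>\<omega>. (X s \<omega>)\<^sup>2 \<partial>M)"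
      by (rule L2_sq_add_le) (use L2_diff[OF LTs Ls] Ls in auto)
    also have "(\<integral>\<omega>. (T n s \<omega> - X s \<omega>)\<^sup>2 \<partial>M) = (\<integral>\<omega>. (X s \<omega> - T n s \<omega>)\<^sup>2 \<partial>M)"
      by (simp add: power2_commute)
    finally have a3: "(\<integral>\<omega>. (T n s \<omega>)\<^sup>2 \<partial>M) \<le> 2 * \<delta> + 2 * B" using a1 a2 by linarith
    have h1: "\<bar>\<integral>\<omega>. (X s \<omega> - T n s \<omega>) * X t \<omega> \<partial>M\<bar> \<le> (\<delta> / \<eta> + \<eta> * B) / 2"
    proof -
      have "\<bar>\<integral>\<omega>. (X s \<omega> - T n s \<omega>) * X t \<omega> \<partial>M\<bar>
          \<le> ((\<integral>\<omega>. (X s \<omega> - T n s \<omega>)\<^sup>2 \<partial>M) / \<eta> + \<eta> * (\<integral>\<omega>. (X t \<omega>)\<^sup>2 \<partial>M)) / 2"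
        by (rule L2_weighted[OF L1 Lt \<eta>])
      also have "\<dots> \<le> (\<delta> / \<eta> + \<eta> * B) / 2"
        using a1 a2 \<eta> by (intro divide_right_mono add_mono mult_left_mono) auto
      finally show ?thesis .
    qed
    have h2: "\<bar>\<integral>\<omega>. T n s \<omega> * (X t \<omega> - T n t \<omega>) \<partial>M\<bar> \<le> (\<delta> / \<eta> + \<eta> * (2 * \<delta> + 2 * B)) / 2"
    proof -
      have "\<bar>\<integral>\<omega>. T n s \<omega> * (X t \<omega> - T n t \<omega>) \<partial>M\<bar> = \<bar>\<integral>\<omega>. (X t \<omega> - T n t \<omega>) * T n s \<omega> \<partial>M\<bar>"
        by (simp add: mult.commute)
      also have "\<dots> \<le> ((\<integral>\<omega>. (X t \<omega> - T n t \<omega>)\<^sup>2 \<partial>M) / \<eta> + \<eta> * (\<integral>\<omega>. (T n s \<omega>)\<^sup>2 \<partial>M)) / 2"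
        by (rule L2_weighted[OF L2' LTs \<eta>])
      also have "\<dots> \<le> (\<delta> / \<eta> + \<eta> * (2 * \<delta> + 2 * B)) / 2"
        using a1 a3 \<eta> by (intro divide_right_mono add_mono mult_left_mono) auto
      finally show ?thesis .
    qed
    have "\<bar>cov_fun M X s t - (\<Sum>j\<in>{1..n}. e j s * e j t * v j)\<bar> \<le> (\<delta> / \<eta> + \<eta> * B) / 2 + (\<delta> / \<eta> + \<eta> * (2 * \<delta> + 2 * B)) / 2"
      unfolding eq using h1 h2 by linarith
    also have "\<dots> = \<delta> / \<eta> + \<eta> * (3 * B + 2 * \<delta>) / 2" by (simp add: algebra_simps add_divide_distrib)
    also have "\<dots> \<le> \<delta> / \<eta> + \<eta> * (3 * B + 2) / 2"
      using \<delta> \<eta> by (intro add_left_mono divide_right_mono mult_left_mono) auto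
    also have "\<delta> / \<eta> \<le> \<gamma> / 2" using \<delta>(3) \<eta> by (simp add: divide_le_eq mult.commute)
    also have "\<eta> * (3 * B + 2) / 2 = \<gamma> / 2" using B(1) by (simp add: \<eta>_def)
    finally show ?thesis by simp
  qed
  then show ?thesis by blast
qed


lemma v_eq_lam: assumes k: "k \<ge> 1" shows "v k = lam k"
proof -
  define c where "c = (\<integral>s. \<bar>indicator {0..1::real} s * e k s\<bar> \<partial>lborel)"
  have key: "(lam k - v k) * e k t = 0" if t: "t \<in> {0..1}" for t
  proof (rule small_imp_zero)
    show "c \<ge> 0" unfolding c_def by (rule Bochner_Integration.integral_nonneg) auto
    fix \<gamma> :: real assume g: "\<gamma> > 0"
    obtain N where N: "\<And>n s. n \<ge> N \<Longrightarrow> s \<in> {0..1} \<Longrightarrow> \<bar>cov_fun M X s t - (\<Sum>j\<in>{1..n}. e j s * e j t * v j)\<bar> \<le> \<gamma>"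
      using unif_approx[OF t g] by blast
    define n where "n = max N k"
    have n: "n \<ge> N" "k \<in> {1..n}" using k by (auto simp: n_def)
    define F where "F s = indicator {0..1::real} s * (cov_fun M X s t * e k s)" for s
    define G where "G s = indicator {0..1::real} s * ((\<Sum>j\<in>{1..n}. e j s * e j t * v j) * e k s)" for s
    have G_eq: "G = (\<lambda>s. \<Sum>j\<in>{1..n}. (e j t * v j) * (indicator {0..1::real} s * (e j s * e k s)))"
      by (auto simp: G_def sum_distrib_left sum_distrib_right algebra_simps)
    have intG: "integrable lborel G"
      unfolding G_eq using e_prod_int k
      by (intro Bochner_Integration.integrable_sum Bochner_Integration.integrable_mult_right) auto
    have "(\<integral>s. G s \<partial>lborel) = (\<Sum>j\<in>{1..n}. (e j t * v j) * (\<integral>s. indicator {0..1::real} s * (e j s * e k s) \<partial>lborel))"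
      unfolding G_eq using e_prod_int k
      by (subst Bochner_Integration.integral_sum) auto
    also have "\<dots> = (\<Sum>j\<in>{1..n}. if j = k then e k t * v k else 0)"
      using k by (intro sum.cong refl) (auto simp: e_orth')
    also have "\<dots> = e k t * v k" using n(2) by simp
    finally have IG: "(\<integral>s. G s \<partial>lborel) = e k t * v k" .
    have intF: "integrable lborel F" unfolding F_def by (rule cov_e_int[OF k t])
    have IF: "(\<integral>s. F s \<partial>lborel) = lam k * e k t" unfolding F_def by (rule eigen'[OF k t])
    have "(lam k - v k) * e k t = (\<integral>s. F s - G s \<partial>lborel)"
      using intF intG IF IG by (simp add: algebra_simps)
    then have "\<bar>(lam k - v k) * e k t\<bar> \<le> (\<integral>s. \<bar>F s - G s\<bar> \<partial>lborel)"
      using integral_norm_bound[of lborel "\<lambda>s. F s - G s"] by simp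
    also have "\<dots> \<le> (\<integral>s. \<gamma> * \<bar>indicator {0..1::real} s * e k s\<bar> \<partial>lborel)"
    proof (rule integral_mono)
      show "integrable lborel (\<lambda>s. \<bar>F s - G s\<bar>)" using intF intG by auto
      show "integrable lborel (\<lambda>s. \<gamma> * \<bar>indicator {0..1::real} s * e k s\<bar>)" using e_int[OF k] by auto
      fix s
      show "\<bar>F s - G s\<bar> \<le> \<gamma> * \<bar>indicator {0..1::real} s * e k s\<bar>"
      proof (cases "s \<in> {0..1}")
        case True
        have "\<bar>F s - G s\<bar> = \<bar>cov_fun M X s t - (\<Sum>j\<in>{1..n}. e j s * e j t * v j)\<bar> * \<bar>e k s\<bar>"
          using True by (simp add: F_def G_def abs_mult flip: left_diff_distrib)
        also have "\<dots> \<le> \<gamma> * \<bar>e k s\<bar>" using N[OF n(1) True] by (intro mult_right_mono) auto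
        finally show ?thesis using True by simp
      qed (simp add: F_def G_def)
    qed
    also have "\<dots> = \<gamma> * c" by (simp add: c_def)
    finally show "\<bar>(lam k - v k) * e k t\<bar> \<le> \<gamma> * c" .
  qed
  obtain t where t: "t \<in> {0..1}" "e k t \<noteq> 0"
  proof (rule ccontr)
    assume "\<not> thesis"
    with that have z: "\<And>t. t \<in> {0..1} \<Longrightarrow> e k t = 0" by blast
    have "(\<lambda>s. indicator {0..1::real} s * (e k s * e k s)) = (\<lambda>s. 0)"
      using z by (auto simp: indicator_def)
    with e_orth'[OF k k] show False by simp
  qed
  with key[OF t(1)] show ?thesis by simp
qed

end



context KL begin

lemma sum_var: assumes F: "finite F" "F \<subseteq> {1..}"
  shows "(\<integral>\<omega>. (\<Sum>k\<in>F. a k * Z k \<omega>)\<^sup>2 \<partial>M) = (\<Sum>k\<in>F. (a k)\<^sup>2 * lam k)"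
proof -
  have "(\<integral>\<omega>. (\<Sum>k\<in>F. a k * Z k \<omega>)\<^sup>2 \<partial>M) = (\<integral>\<omega>. (\<Sum>k\<in>F. a k * Z k \<omega>) * (\<Sum>k\<in>F. a k * Z k \<omega>) \<partial>M)"
    by (simp add: power2_eq_square)
  also have "\<dots> = (\<Sum>k\<in>F. a k * a k * v k)" by (rule sum_cross(2)[OF F])
  also have "\<dots> = (\<Sum>k\<in>F. (a k)\<^sup>2 * lam k)"
    using F by (intro sum.cong refl) (auto simp: v_eq_lam power2_eq_square)
  finally show ?thesis .
qed

lemma sum_mgf': assumes F: "finite F" "F \<subseteq> {1..}"
  shows "(\<integral>\<^sup>+\<omega>. ennreal (exp (\<theta> * (\<Sum>k\<in>F. a k * Z k \<omega>))) \<partial>M)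
     \<le> ennreal (exp (\<theta>\<^sup>2 * (\<integral>\<omega>. (\<Sum>k\<in>F. a k * Z k \<omega>)\<^sup>2 \<partial>M) / 2))"
  using sum_mgf[OF F] by (simp add: sum_var[OF F])

lemma trunc_split: assumes "L \<le> n"
  shows "T n t \<omega> - T L t \<omega> = (\<Sum>k\<in>{Suc L..n}. e k t * Z k \<omega>)"
proof -
  have "{1..n} = {1..L} \<union> {Suc L..n}" using assms by auto
  then have "(\<Sum>k\<in>{1..n}. e k t * Z k \<omega>) = (\<Sum>k\<in>{1..L}. e k t * Z k \<omega>) + (\<Sum>k\<in>{Suc L..n}. e k t * Z k \<omega>)"
    by (simp add: sum.union_disjoint)
  then show ?thesis by (simp add: trunc_eq)
qed

lemma trunc_mgf: "(\<integral>\<^sup>+\<omega>. ennreal (exp (\<theta> * T n t \<omega>)) \<partial>M) \<le> ennreal (exp (\<theta>\<^sup>2 * (\<integral>\<omega>. (T n t \<omega>)\<^sup>2 \<partial>M) / 2))"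
  unfolding trunc_eq by (rule sum_mgf') auto

lemma diff_mgf: assumes "L \<le> n"
  shows "(\<integral>\<^sup>+\<omega>. ennreal (exp (\<theta> * (T n t \<omega> - T L t \<omega>))) \<partial>M)
     \<le> ennreal (exp (\<theta>\<^sup>2 * (\<integral>\<omega>. (T n t \<omega> - T L t \<omega>)\<^sup>2 \<partial>M) / 2))"
  unfolding trunc_split[OF assms] by (rule sum_mgf') auto

lemma nn_to_int:
  fixes f :: "'a \<Rightarrow> real"
  assumes "f \<in> borel_measurable M" "\<And>x. 0 \<le> f x" "(\<integral>\<^sup>+x. ennreal (f x) \<partial>M) \<le> ennreal b" "0 \<le> b"
  shows "integrable M f" "(\<integral>x. f x \<partial>M) \<le> b"
proof -
  show i: "integrable M f"
    using assms by (intro integrableI_nonneg) (auto simp: le_less_trans)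
  have "ennreal (\<integral>x. f x \<partial>M) \<le> ennreal b"
    using nn_integral_eq_integral[OF i] assms by simp
  then show "(\<integral>x. f x \<partial>M) \<le> b" using assms(4) by simp
qed

end



context KL begin

lemma tail_mgf:
  assumes t: "t \<in> {0..1}" and L: "(\<integral>\<omega>. (X t \<omega> - T L t \<omega>)\<^sup>2 \<partial>M) \<le> \<epsilon>\<^sup>2" and ep: "\<epsilon> > 0"
  shows "(\<integral>\<^sup>+\<omega>. ennreal (exp (\<alpha> * (X t \<omega> - T L t \<omega>))) \<partial>M) \<le> ennreal (exp (\<alpha>\<^sup>2 * (3 * \<epsilon>\<^sup>2) / 2))"
proof -
  have Lt: "L2 (X t)" using L2_X t by auto
  have "\<epsilon>\<^sup>2 / 2 > 0" using ep by simp
  from conv'[OF this] obtain N0 where N0': "\<forall>n\<ge>N0. \<forall>t\<in>{0..1}. (\<integral>\<omega>. (X t \<omega> - T n t \<omega>)\<^sup>2 \<partial>M) \<le> \<epsilon>\<^sup>2 / 2"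
    by blast
  have N0: "\<And>n. n \<ge> N0 \<Longrightarrow> (\<integral>\<omega>. (X t \<omega> - T n t \<omega>)\<^sup>2 \<partial>M) \<le> \<epsilon>\<^sup>2 / 2"
    using N0' t by blast
  have sub: "(\<integral>\<^sup>+\<omega>. ennreal (exp (\<alpha> * (T n t \<omega> - T L t \<omega>))) \<partial>M) \<le> ennreal (exp (\<alpha>\<^sup>2 * (3 * \<epsilon>\<^sup>2) / 2))"
    if n: "n \<ge> max L N0" for n
  proof -
    have "(\<integral>\<omega>. (T n t \<omega> - T L t \<omega>)\<^sup>2 \<partial>M) = (\<integral>\<omega>. ((T n t \<omega> - X t \<omega>) + (X t \<omega> - T L t \<omega>))\<^sup>2 \<partial>M)"
      by simp
    also have "\<dots> \<le> 2 * (\<integral>\<omega>. (T n t \<omega> - X t \<omega>)\<^sup>2 \<partial>M) + 2 * (\<integral>\<omega>. (X t \<omega> - T L t \<omega>)\<^sup>2 \<partial>M)"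
      by (rule L2_sq_add_le) (use L2_diff L2_trunc Lt in auto)
    also have "(\<integral>\<omega>. (T n t \<omega> - X t \<omega>)\<^sup>2 \<partial>M) = (\<integral>\<omega>. (X t \<omega> - T n t \<omega>)\<^sup>2 \<partial>M)"
      by (simp add: power2_commute)
    finally have v: "(\<integral>\<omega>. (T n t \<omega> - T L t \<omega>)\<^sup>2 \<partial>M) \<le> 3 * \<epsilon>\<^sup>2" using N0[of n] n L by simp
    have "(\<integral>\<^sup>+\<omega>. ennreal (exp (\<alpha> * (T n t \<omega> - T L t \<omega>))) \<partial>M)
        \<le> ennreal (exp (\<alpha>\<^sup>2 * (\<integral>\<omega>. (T n t \<omega> - T L t \<omega>)\<^sup>2 \<partial>M) / 2))"
      by (rule diff_mgf) (use n in auto)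
    also have "\<dots> \<le> ennreal (exp (\<alpha>\<^sup>2 * (3 * \<epsilon>\<^sup>2) / 2))"
      using v by (intro ennreal_leI) (simp add: mult_left_mono)
    finally show ?thesis .
  qed
  have "\<forall>j::nat. \<exists>n. n \<ge> max L N0 \<and> (\<integral>\<omega>. (X t \<omega> - T n t \<omega>)\<^sup>2 \<partial>M) \<le> (1/2)^j"
  proof
    fix j :: nat
    have "(1/2::real)^j > 0" by simp
    from conv'[OF this] obtain Nj where Nj': "\<forall>n\<ge>Nj. \<forall>t\<in>{0..1}. (\<integral>\<omega>. (X t \<omega> - T n t \<omega>)\<^sup>2 \<partial>M) \<le> (1/2)^j"
      by blast
    then have "\<And>n. n \<ge> Nj \<Longrightarrow> (\<integral>\<omega>. (X t \<omega> - T n t \<omega>)\<^sup>2 \<partial>M) \<le> (1/2)^j"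
      using t by blast
    then show "\<exists>n. n \<ge> max L N0 \<and> (\<integral>\<omega>. (X t \<omega> - T n t \<omega>)\<^sup>2 \<partial>M) \<le> (1/2)^j"
      by (intro exI[of _ "max (max L N0) Nj"]) auto
  qed
  then obtain r where r: "\<And>j. r j \<ge> max L N0" "\<And>j. (\<integral>\<omega>. (X t \<omega> - T (r j) t \<omega>)\<^sup>2 \<partial>M) \<le> (1/2)^j"
    by metis
  define f where "f j \<omega> = (X t \<omega> - T (r j) t \<omega>)\<^sup>2" for j \<omega>
  have Lf: "L2 (\<lambda>\<omega>. X t \<omega> - T (r j) t \<omega>)" for j using L2_diff L2_trunc Lt by auto
  have fm: "f j \<in> borel_measurable M" for j
    using L2_meas[OF Lf[of j]] unfolding f_def by measurable
  have fi: "integrable M (f j)" for j using L2_sqint[OF Lf[of j]] unfolding f_def .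
  have "(\<integral>\<^sup>+\<omega>. (\<Sum>j. ennreal (f j \<omega>)) \<partial>M) = (\<Sum>j. \<integral>\<^sup>+\<omega>. ennreal (f j \<omega>) \<partial>M)"
    by (rule nn_integral_suminf) (use fm in auto)
  also have "\<dots> = (\<Sum>j. ennreal (\<integral>\<omega>. f j \<omega> \<partial>M))"
    using fi by (subst nn_integral_eq_integral) (auto simp: f_def)
  also have "\<dots> \<le> (\<Sum>j. ennreal ((1/2)^j))"
    using r(2) by (intro suminf_le summableI ennreal_leI) (auto simp: f_def)
  also have "\<dots> = ennreal (\<Sum>j. (1/2)^j)"
    by (rule suminf_ennreal2) auto
  also have "(\<Sum>j. (1/2::real)^j) = 2"
    using suminf_geometric[of "1/2::real"] by simp
  finally have fin: "(\<integral>\<^sup>+\<omega>. (\<Sum>j. ennreal (f j \<omega>)) \<partial>M) \<noteq> \<infinity>"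
    by (auto simp: top_unique)
  have "AE \<omega> in M. (\<Sum>j. ennreal (f j \<omega>)) \<noteq> \<infinity>"
    by (rule nn_integral_PInf_AE[OF _ fin]) (use fm in measurable)
  then have AEconv: "AE \<omega> in M. (\<lambda>j. T (r j) t \<omega>) \<longlonglongrightarrow> X t \<omega>"
  proof (rule AE_mp, intro AE_I2 impI)
    fix \<omega> assume "(\<Sum>j. ennreal (f j \<omega>)) \<noteq> \<infinity>"
    then have "summable (\<lambda>j. f j \<omega>)"
      by (intro summable_suminf_not_top) (auto simp: f_def)
    then have "(\<lambda>j. f j \<omega>) \<longlonglongrightarrow> 0" by (rule summable_LIMSEQ_zero)
    then have "(\<lambda>j. sqrt (f j \<omega>)) \<longlonglongrightarrow> sqrt 0" by (intro tendsto_real_sqrt)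
    then have "(\<lambda>j. \<bar>X t \<omega> - T (r j) t \<omega>\<bar>) \<longlonglongrightarrow> 0" by (simp add: f_def)
    then have "(\<lambda>j. X t \<omega> - T (r j) t \<omega>) \<longlonglongrightarrow> 0" by (simp add: tendsto_rabs_zero_iff)
    then have "(\<lambda>j. X t \<omega> - (X t \<omega> - T (r j) t \<omega>)) \<longlonglongrightarrow> X t \<omega> - 0"
      by (intro tendsto_diff tendsto_const)
    then show "(\<lambda>j. T (r j) t \<omega>) \<longlonglongrightarrow> X t \<omega>" by simp
  qed
  define u where "u j \<omega> = ennreal (exp (\<alpha> * (T (r j) t \<omega> - T L t \<omega>)))" for j \<omega>
  have um: "u j \<in> borel_measurable M" for j
    using L2_meas[OF L2_trunc] unfolding u_def by measurable
  have "(\<integral>\<^sup>+\<omega>. ennreal (exp (\<alpha> * (X t \<omega> - T L t \<omega>))) \<partial>M) = (\<integral>\<^sup>+\<omega>. liminf (\<lambda>j. u j \<omega>) \<partial>M)"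
  proof (rule nn_integral_cong_AE)
    show "AE \<omega> in M. ennreal (exp (\<alpha> * (X t \<omega> - T L t \<omega>))) = liminf (\<lambda>j. u j \<omega>)"
      using AEconv
    proof (rule AE_mp, intro AE_I2 impI)
      fix \<omega> assume c: "(\<lambda>j. T (r j) t \<omega>) \<longlonglongrightarrow> X t \<omega>"
      have "(\<lambda>j. u j \<omega>) \<longlonglongrightarrow> ennreal (exp (\<alpha> * (X t \<omega> - T L t \<omega>)))"
        unfolding u_def by (intro tendsto_ennrealI tendsto_exp tendsto_mult tendsto_diff c tendsto_const)
      then show "ennreal (exp (\<alpha> * (X t \<omega> - T L t \<omega>))) = liminf (\<lambda>j. u j \<omega>)"
        by (simp add: lim_imp_Liminf)
    qed
  qed
  also have "\<dots> \<le> liminf (\<lambda>j. integral\<^sup>N M (u j))"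
    by (rule nn_integral_liminf) (use um in auto)
  also have "\<dots> \<le> limsup (\<lambda>j. integral\<^sup>N M (u j))"
    by (rule Liminf_le_Limsup) simp
  also have "\<dots> \<le> ennreal (exp (\<alpha>\<^sup>2 * (3 * \<epsilon>\<^sup>2) / 2))"
  proof (intro Limsup_bounded always_eventually allI)
    fix j
    have "u j = (\<lambda>\<omega>. ennreal (exp (\<alpha> * (T (r j) t \<omega> - T L t \<omega>))))" by (simp add: u_def fun_eq_iff)
    then show "integral\<^sup>N M (u j) \<le> ennreal (exp (\<alpha>\<^sup>2 * (3 * \<epsilon>\<^sup>2) / 2))"
      using sub[of "r j"] r(1)[of j] by simp
  qed
  finally show ?thesis .
qed

end



lemma pointwise:
  fixes G x y c K \<epsilon> :: real
  assumes G: "\<bar>G\<bar> \<le> max \<bar>exp (c*x) - exp (c*y)\<bar> (K * \<bar>x - y\<bar>)" and K: "K \<ge> 0" and ep: "\<epsilon> > 0"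
  shows "G\<^sup>2 \<le> \<epsilon>\<^sup>2 * (64 * c\<^sup>2 * (exp ((1/\<epsilon> + 4*c) * (x - y)) + exp ((4*c - 1/\<epsilon>) * (x - y))
                     + exp ((x - y) / \<epsilon>) + exp (- ((x - y) / \<epsilon>)))
           + c\<^sup>2 / 2 * exp (4 * c * y) + 2 * K\<^sup>2 * (exp ((x - y) / \<epsilon>) + exp (- ((x - y) / \<epsilon>))))"
proof -
  define d where "d = x - y"
  have x: "x = y + d" by (simp add: d_def)
  define E1 where "E1 = exp ((1/\<epsilon> + 4*c) * d)"
  define E2 where "E2 = exp ((4*c - 1/\<epsilon>) * d)"
  define E3 where "E3 = exp (d / \<epsilon>)"
  define E4 where "E4 = exp (- (d / \<epsilon>))"
  define w where "w = exp (2*c*d) + 1"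
  define P where "P = exp (2*c*y)"
  define a where "a = exp (c*x) - exp (c*y)"
  have s1: "G\<^sup>2 \<le> a\<^sup>2 + K\<^sup>2 * d\<^sup>2"
  proof -
    have "G\<^sup>2 = \<bar>G\<bar>\<^sup>2" by simp
    also have "\<dots> \<le> (max \<bar>a\<bar> (K * \<bar>d\<bar>))\<^sup>2"
      using G by (intro power_mono) (auto simp: a_def d_def)
    also have "\<dots> \<le> a\<^sup>2 + K\<^sup>2 * d\<^sup>2"
      using K by (auto simp: max_def power_mult_distrib)
    finally show ?thesis .
  qed
  have s2: "a\<^sup>2 \<le> c\<^sup>2 * d\<^sup>2 * (exp (2*c*x) + exp (2*c*y))"
  proof -
    have "\<bar>a\<bar> \<le> \<bar>c*x - c*y\<bar> * max (exp (c*x)) (exp (c*y))"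
      unfolding a_def by (rule exp_diff_bound)
    also have "\<bar>c*x - c*y\<bar> = \<bar>c\<bar> * \<bar>d\<bar>" by (simp add: d_def abs_mult flip: right_diff_distrib)
    finally have aa: "\<bar>a\<bar> \<le> \<bar>c\<bar> * \<bar>d\<bar> * max (exp (c*x)) (exp (c*y))" .
    have "a\<^sup>2 \<le> (\<bar>c\<bar> * \<bar>d\<bar> * max (exp (c*x)) (exp (c*y)))\<^sup>2"
      using power_mono[OF aa abs_ge_zero, of 2] by simp
    also have "\<dots> = c\<^sup>2 * d\<^sup>2 * (max (exp (c*x)) (exp (c*y)))\<^sup>2"
      by (simp add: power_mult_distrib)
    also have "(max (exp (c*x)) (exp (c*y)))\<^sup>2 \<le> exp (2*c*x) + exp (2*c*y)"
    proof -
      have "(exp (c*x))\<^sup>2 = exp (2*c*x)" "(exp (c*y))\<^sup>2 = exp (2*c*y)"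
        by (simp_all add: power2_eq_square flip: exp_add)
      then show ?thesis by (auto simp: max_def)
    qed
    finally show ?thesis by (simp add: mult_left_mono)
  qed
  have s3: "exp (2*c*x) + exp (2*c*y) = P * w"
    by (simp add: P_def w_def x distrib_left distrib_right flip: exp_add)
  have s4: "c\<^sup>2 * d\<^sup>2 * (P * w) \<le> c\<^sup>2 * (d^4 * w\<^sup>2 / \<epsilon>\<^sup>2 + \<epsilon>\<^sup>2 * exp (4*c*y)) / 2"
  proof -
    have wp: "w > 0" by (simp add: w_def add_pos_pos)
    have Pp: "P > 0" by (simp add: P_def)
    have "d\<^sup>2 * w * P = \<bar>(d\<^sup>2 * w) * P\<bar>" using wp Pp by simp
    also have "\<dots> \<le> ((d\<^sup>2 * w)\<^sup>2 / \<epsilon>\<^sup>2 + \<epsilon>\<^sup>2 * P\<^sup>2) / 2"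
      using ep by (intro abs_mult_le_weighted) simp
    also have "(d\<^sup>2 * w)\<^sup>2 = d^4 * w\<^sup>2" by (simp add: power_mult_distrib flip: power_mult)
    also have "P\<^sup>2 = exp (4*c*y)" by (simp add: P_def power2_eq_square flip: exp_add)
    finally have "d\<^sup>2 * w * P \<le> (d^4 * w\<^sup>2 / \<epsilon>\<^sup>2 + \<epsilon>\<^sup>2 * exp (4*c*y)) / 2" .
    then have "c\<^sup>2 * (d\<^sup>2 * w * P) \<le> c\<^sup>2 * ((d^4 * w\<^sup>2 / \<epsilon>\<^sup>2 + \<epsilon>\<^sup>2 * exp (4*c*y)) / 2)"
      by (intro mult_left_mono) auto
    then show ?thesis by (simp add: algebra_simps)
  qed
  have s5: "w\<^sup>2 \<le> 2 * (exp (4*c*d) + 1)"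
  proof -
    have "w\<^sup>2 \<le> 2 * (exp (2*c*d))\<^sup>2 + 2 * 1\<^sup>2" unfolding w_def by (rule sq_add_le)
    also have "(exp (2*c*d))\<^sup>2 = exp (4*c*d)" by (simp add: power2_eq_square flip: exp_add)
    finally show ?thesis by simp
  qed
  have s6: "d^4 \<le> 64 * \<epsilon>^4 * (E3 + E4)"
  proof -
    have "(d/\<epsilon>)^4 \<le> 64 * (E3 + E4)" unfolding E3_def E4_def by (rule pow4_le_exp)
    then have "\<epsilon>^4 * (d/\<epsilon>)^4 \<le> \<epsilon>^4 * (64 * (E3 + E4))" by (intro mult_left_mono) auto
    then show ?thesis using ep by (simp add: power_divide algebra_simps)
  qed
  have s7: "d^4 * w\<^sup>2 / \<epsilon>\<^sup>2 \<le> 128 * \<epsilon>\<^sup>2 * (E1 + E2 + E3 + E4)"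
  proof -
    have "d^4 * w\<^sup>2 \<le> (64 * \<epsilon>^4 * (E3 + E4)) * (2 * (exp (4*c*d) + 1))"
      using s5 s6 by (intro mult_mono) (auto simp: E3_def E4_def add_nonneg_nonneg)
    also have "(64 * \<epsilon>^4 * (E3 + E4)) * (2 * (exp (4*c*d) + 1)) = 128 * \<epsilon>^4 * ((E3 + E4) * exp (4*c*d) + (E3 + E4))"
      by (simp add: algebra_simps)
    also have "(E3 + E4) * exp (4*c*d) = E1 + E2"
      by (simp add: E1_def E2_def E3_def E4_def distrib_right algebra_simps flip: exp_add)
    also have "E1 + E2 + (E3 + E4) = E1 + E2 + E3 + E4" by simp
    finally have "d^4 * w\<^sup>2 \<le> 128 * \<epsilon>^4 * (E1 + E2 + E3 + E4)" .
    then have "d^4 * w\<^sup>2 / \<epsilon>\<^sup>2 \<le> 128 * \<epsilon>^4 * (E1 + E2 + E3 + E4) / \<epsilon>\<^sup>2"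
      by (intro divide_right_mono) auto
    also have "128 * \<epsilon>^4 * (E1 + E2 + E3 + E4) / \<epsilon>\<^sup>2 = 128 * \<epsilon>\<^sup>2 * (E1 + E2 + E3 + E4)"
      using ep by (simp add: power4_eq_xxxx power2_eq_square)
    finally show ?thesis .
  qed
  have s8: "K\<^sup>2 * d\<^sup>2 \<le> 2 * K\<^sup>2 * \<epsilon>\<^sup>2 * (E3 + E4)"
  proof -
    have "(d/\<epsilon>)\<^sup>2 \<le> 2 * (E3 + E4)" unfolding E3_def E4_def by (rule sq_le_exp)
    then have "\<epsilon>\<^sup>2 * (d/\<epsilon>)\<^sup>2 \<le> \<epsilon>\<^sup>2 * (2 * (E3 + E4))" by (intro mult_left_mono) auto
    then have "d\<^sup>2 \<le> 2 * \<epsilon>\<^sup>2 * (E3 + E4)" using ep by (simp add: power_divide algebra_simps)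
    then have "K\<^sup>2 * d\<^sup>2 \<le> K\<^sup>2 * (2 * \<epsilon>\<^sup>2 * (E3 + E4))" by (intro mult_left_mono) auto
    then show ?thesis by (simp add: algebra_simps)
  qed
  have "c\<^sup>2 * (d^4 * w\<^sup>2 / \<epsilon>\<^sup>2 + \<epsilon>\<^sup>2 * exp (4*c*y)) / 2 \<le> c\<^sup>2 * (128 * \<epsilon>\<^sup>2 * (E1 + E2 + E3 + E4) + \<epsilon>\<^sup>2 * exp (4*c*y)) / 2"
    using s7 by (intro divide_right_mono mult_left_mono add_right_mono) auto
  then have "G\<^sup>2 \<le> c\<^sup>2 * (128 * \<epsilon>\<^sup>2 * (E1 + E2 + E3 + E4) + \<epsilon>\<^sup>2 * exp (4*c*y)) / 2 + 2 * K\<^sup>2 * \<epsilon>\<^sup>2 * (E3 + E4)"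
  proof -
    have "a\<^sup>2 \<le> c\<^sup>2 * d\<^sup>2 * (P * w)" using s2 s3 by simp
    then show ?thesis using s1 s4 s8 \<open>c\<^sup>2 * (d^4 * w\<^sup>2 / \<epsilon>\<^sup>2 + \<epsilon>\<^sup>2 * exp (4*c*y)) / 2 \<le> _\<close> by linarith
  qed
  also have "\<dots> = \<epsilon>\<^sup>2 * (64 * c\<^sup>2 * (E1 + E2 + E3 + E4) + c\<^sup>2 / 2 * exp (4 * c * y) + 2 * K\<^sup>2 * (E3 + E4))"
    by (simp add: algebra_simps)
  finally show ?thesis by (simp add: E1_def E2_def E3_def E4_def d_def)
qed




context KL begin

lemma trunc_index_prop:
  assumes ep: "\<epsilon> > 0"
  shows "\<forall>t\<in>{0..1}. (\<integral>\<omega>. (T (trunc_index M X e \<epsilon>) t \<omega> - X t \<omega>)\<^sup>2 \<partial>M) \<le> \<epsilon>\<^sup>2"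
proof -
  have "\<exists>L. \<forall>t\<in>{0..1}. (\<integral>\<omega>. (T L t \<omega> - X t \<omega>)\<^sup>2 \<partial>M) \<le> \<epsilon>\<^sup>2"
    using KL_conv[of "\<epsilon>\<^sup>2"] ep by auto
  then show ?thesis unfolding trunc_index_def by (rule LeastI_ex)
qed

lemma exp_param_bound:
  fixes \<alpha> \<epsilon> c :: real
  assumes "\<bar>\<alpha>\<bar> * \<epsilon> \<le> 1 + 4 * \<bar>c\<bar>" "\<epsilon> > 0"
  shows "ennreal (exp (\<alpha>\<^sup>2 * (3 * \<epsilon>\<^sup>2) / 2)) \<le> ennreal (exp (3 * (1 + 4 * \<bar>c\<bar>)\<^sup>2 / 2))"
proof -
  have "(\<bar>\<alpha>\<bar> * \<epsilon>)\<^sup>2 \<le> (1 + 4 * \<bar>c\<bar>)\<^sup>2" using assms by (intro power_mono) auto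
  then have "\<alpha>\<^sup>2 * \<epsilon>\<^sup>2 \<le> (1 + 4 * \<bar>c\<bar>)\<^sup>2" by (simp add: power_mult_distrib)
  then have "\<alpha>\<^sup>2 * (3 * \<epsilon>\<^sup>2) / 2 \<le> 3 * (1 + 4 * \<bar>c\<bar>)\<^sup>2 / 2" by simp
  then show ?thesis by (intro ennreal_leI) simp
qed

lemma main_est:
  fixes g :: "real \<Rightarrow> real" and c K B \<epsilon> :: real
  assumes t: "t \<in> {0..1}" and ep: "\<epsilon> > 0" "\<epsilon> \<le> 1" and K: "K \<ge> 0"
    and B: "\<And>s. s \<in> {0..1} \<Longrightarrow> (\<integral>\<omega>. (X s \<omega>)\<^sup>2 \<partial>M) \<le> B"
    and gb: "\<And>x y. g x - g y \<le> max \<bar>exp (c * x) - exp (c * y)\<bar> (K * \<bar>x - y\<bar>)"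
  shows "(\<integral>\<^sup>+\<omega>. ennreal ((g (X t \<omega>) - g (T (trunc_index M X e \<epsilon>) t \<omega>))\<^sup>2) \<partial>M)
      \<le> ennreal ((64 * c\<^sup>2 * (4 * exp (3 * (1 + 4 * \<bar>c\<bar>)\<^sup>2 / 2)) + c\<^sup>2 / 2 * exp (16 * c\<^sup>2 * (1 + B))
                  + 2 * K\<^sup>2 * (2 * exp (3 * (1 + 4 * \<bar>c\<bar>)\<^sup>2 / 2))) * \<epsilon>\<^sup>2)"
proof -
  define L where "L = trunc_index M X e \<epsilon>"
  define A where "A = exp (3 * (1 + 4 * \<bar>c\<bar>)\<^sup>2 / 2)"
  define A' where "A' = exp (16 * c\<^sup>2 * (1 + B))"
  define D where "D \<omega> = X t \<omega> - T L t \<omega>" for \<omega>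
  define Y where "Y \<omega> = T L t \<omega>" for \<omega>
  have Lt: "L2 (X t)" using L2_X t by auto
  have Dm: "D \<in> borel_measurable M" unfolding D_def using L2_meas[OF L2_diff[OF Lt L2_trunc]] by simp
  have Ym: "Y \<in> borel_measurable M" unfolding Y_def using L2_meas[OF L2_trunc] by simp
  have EL: "(\<integral>\<omega>. (X t \<omega> - T L t \<omega>)\<^sup>2 \<partial>M) \<le> \<epsilon>\<^sup>2"
    using trunc_index_prop[OF ep(1)] t by (simp add: L_def power2_commute)
  have Dint: "integrable M (\<lambda>\<omega>. exp (\<alpha> * D \<omega>)) \<and> (\<integral>\<omega>. exp (\<alpha> * D \<omega>) \<partial>M) \<le> A"
    if "\<bar>\<alpha>\<bar> * \<epsilon> \<le> 1 + 4 * \<bar>c\<bar>" for \<alpha>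
  proof -
    have "(\<integral>\<^sup>+\<omega>. ennreal (exp (\<alpha> * D \<omega>)) \<partial>M) \<le> ennreal (exp (\<alpha>\<^sup>2 * (3 * \<epsilon>\<^sup>2) / 2))"
      unfolding D_def by (rule tail_mgf[OF t EL ep(1)])
    also have "\<dots> \<le> ennreal A" unfolding A_def by (rule exp_param_bound[OF that ep(1)])
    finally have "(\<integral>\<^sup>+\<omega>. ennreal (exp (\<alpha> * D \<omega>)) \<partial>M) \<le> ennreal A" .
    then show ?thesis using nn_to_int[of "\<lambda>\<omega>. exp (\<alpha> * D \<omega>)" A] Dm by (auto simp: A_def)
  qed
  have Yint: "integrable M (\<lambda>\<omega>. exp ((4 * c) * Y \<omega>)) \<and> (\<integral>\<omega>. exp ((4 * c) * Y \<omega>) \<partial>M) \<le> A'"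
  proof -
    have "(\<integral>\<omega>. (T L t \<omega>)\<^sup>2 \<partial>M) = (\<integral>\<omega>. ((T L t \<omega> - X t \<omega>) + X t \<omega>)\<^sup>2 \<partial>M)" by simp
    also have "\<dots> \<le> 2 * (\<integral>\<omega>. (T L t \<omega> - X t \<omega>)\<^sup>2 \<partial>M) + 2 * (\<integral>\<omega>. (X t \<omega>)\<^sup>2 \<partial>M)"
      by (rule L2_sq_add_le) (use L2_diff L2_trunc Lt in auto)
    also have "(\<integral>\<omega>. (T L t \<omega> - X t \<omega>)\<^sup>2 \<partial>M) = (\<integral>\<omega>. (X t \<omega> - T L t \<omega>)\<^sup>2 \<partial>M)"
      by (simp add: power2_commute)
    finally have v: "(\<integral>\<omega>. (T L t \<omega>)\<^sup>2 \<partial>M) \<le> 2 * (1 + B)" using EL B[OF t] ep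
      by (smt (verit) power_le_one zero_le_power2 less_imp_le)
    have "(\<integral>\<^sup>+\<omega>. ennreal (exp ((4 * c) * Y \<omega>)) \<partial>M) \<le> ennreal (exp ((4 * c)\<^sup>2 * (\<integral>\<omega>. (T L t \<omega>)\<^sup>2 \<partial>M) / 2))"
      unfolding Y_def by (rule trunc_mgf)
    also have "\<dots> \<le> ennreal A'"
    proof -
      have "c\<^sup>2 * (\<integral>\<omega>. (T L t \<omega>)\<^sup>2 \<partial>M) \<le> c\<^sup>2 * (2 * (1 + B))"
        by (rule mult_left_mono[OF v]) simp
      then have "(4 * c)\<^sup>2 * (\<integral>\<omega>. (T L t \<omega>)\<^sup>2 \<partial>M) / 2 \<le> 16 * c\<^sup>2 * (1 + B)"
        by (simp add: power_mult_distrib algebra_simps)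
      then show ?thesis unfolding A'_def by (intro ennreal_leI) simp
    qed
    finally have "(\<integral>\<^sup>+\<omega>. ennreal (exp ((4 * c) * Y \<omega>)) \<partial>M) \<le> ennreal A'" .
    then show ?thesis using nn_to_int[of "\<lambda>\<omega>. exp ((4 * c) * Y \<omega>)" A'] Ym by (auto simp: A'_def)
  qed
  define a1 where "a1 = 1/\<epsilon> + 4*c"
  define a2 where "a2 = 4*c - 1/\<epsilon>"
  define a3 where "a3 = 1/\<epsilon>"
  define a4 where "a4 = -1/\<epsilon>"
  have bnds: "\<bar>a1\<bar> * \<epsilon> \<le> 1 + 4 * \<bar>c\<bar>" "\<bar>a2\<bar> * \<epsilon> \<le> 1 + 4 * \<bar>c\<bar>"
             "\<bar>a3\<bar> * \<epsilon> \<le> 1 + 4 * \<bar>c\<bar>" "\<bar>a4\<bar> * \<epsilon> \<le> 1 + 4 * \<bar>c\<bar>"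
  proof -
    have "\<bar>4 * c\<bar> * \<epsilon> \<le> 4 * \<bar>c\<bar>" using ep by (simp add: abs_mult mult_left_le)
    moreover have "\<bar>1/\<epsilon>\<bar> * \<epsilon> = 1" using ep by simp
    moreover have "\<bar>a1\<bar> * \<epsilon> \<le> (\<bar>1/\<epsilon>\<bar> + \<bar>4 * c\<bar>) * \<epsilon>"
      unfolding a1_def using ep by (intro mult_right_mono abs_triangle_ineq) auto
    moreover have "\<bar>a2\<bar> * \<epsilon> \<le> (\<bar>4 * c\<bar> + \<bar>1/\<epsilon>\<bar>) * \<epsilon>"
      unfolding a2_def using ep by (intro mult_right_mono abs_triangle_ineq4) auto
    ultimately show "\<bar>a1\<bar> * \<epsilon> \<le> 1 + 4 * \<bar>c\<bar>" "\<bar>a2\<bar> * \<epsilon> \<le> 1 + 4 * \<bar>c\<bar>"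
      "\<bar>a3\<bar> * \<epsilon> \<le> 1 + 4 * \<bar>c\<bar>" "\<bar>a4\<bar> * \<epsilon> \<le> 1 + 4 * \<bar>c\<bar>"
      using ep by (auto simp: a3_def a4_def distrib_right)
  qed
  note I1 = Dint[OF bnds(1)] and I2 = Dint[OF bnds(2)] and I3 = Dint[OF bnds(3)] and I4 = Dint[OF bnds(4)]
  define H where "H \<omega> = \<epsilon>\<^sup>2 * (64 * c\<^sup>2 * (exp (a1 * D \<omega>) + exp (a2 * D \<omega>) + exp (a3 * D \<omega>) + exp (a4 * D \<omega>))
           + c\<^sup>2 / 2 * exp ((4 * c) * Y \<omega>) + 2 * K\<^sup>2 * (exp (a3 * D \<omega>) + exp (a4 * D \<omega>)))" for \<omega>
  have Hint: "integrable M H" unfolding H_def using I1 I2 I3 I4 Yint by auto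
  have "(\<integral>\<omega>. H \<omega> \<partial>M) = \<epsilon>\<^sup>2 * (64 * c\<^sup>2 * ((\<integral>\<omega>. exp (a1 * D \<omega>) \<partial>M) + (\<integral>\<omega>. exp (a2 * D \<omega>) \<partial>M)
       + (\<integral>\<omega>. exp (a3 * D \<omega>) \<partial>M) + (\<integral>\<omega>. exp (a4 * D \<omega>) \<partial>M))
           + c\<^sup>2 / 2 * (\<integral>\<omega>. exp ((4 * c) * Y \<omega>) \<partial>M) + 2 * K\<^sup>2 * ((\<integral>\<omega>. exp (a3 * D \<omega>) \<partial>M) + (\<integral>\<omega>. exp (a4 * D \<omega>) \<partial>M)))"
    unfolding H_def using I1 I2 I3 I4 Yint by simp
  also have "\<dots> \<le> \<epsilon>\<^sup>2 * (64 * c\<^sup>2 * (A + A + A + A) + c\<^sup>2 / 2 * A' + 2 * K\<^sup>2 * (A + A))"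
    using I1 I2 I3 I4 Yint
    by (intro mult_left_mono add_mono) auto
  finally have IH: "(\<integral>\<omega>. H \<omega> \<partial>M) \<le> (64 * c\<^sup>2 * (4 * A) + c\<^sup>2 / 2 * A' + 2 * K\<^sup>2 * (2 * A)) * \<epsilon>\<^sup>2"
    by (simp add: algebra_simps)
  have pw: "(g (X t \<omega>) - g (T L t \<omega>))\<^sup>2 \<le> H \<omega>" for \<omega>
  proof -
    let ?x = "X t \<omega>" and ?y = "T L t \<omega>"
    have "\<bar>g ?x - g ?y\<bar> \<le> max \<bar>exp (c * ?x) - exp (c * ?y)\<bar> (K * \<bar>?x - ?y\<bar>)"
      using gb[of ?x ?y] gb[of ?y ?x] by (auto simp: abs_minus_commute abs_le_iff)
    from pointwise[OF this K ep(1)] show ?thesis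
      by (simp add: H_def D_def Y_def a1_def a2_def a3_def a4_def)
  qed
  have "(\<integral>\<^sup>+\<omega>. ennreal ((g (X t \<omega>) - g (T L t \<omega>))\<^sup>2) \<partial>M) \<le> (\<integral>\<^sup>+\<omega>. ennreal (H \<omega>) \<partial>M)"
    using pw by (intro nn_integral_mono ennreal_leI) auto
  also have "\<dots> = ennreal (\<integral>\<omega>. H \<omega> \<partial>M)"
    using pw by (intro nn_integral_eq_integral Hint AE_I2) (auto intro: order_trans[OF zero_le_power2])
  also have "\<dots> \<le> ennreal ((64 * c\<^sup>2 * (4 * A) + c\<^sup>2 / 2 * A' + 2 * K\<^sup>2 * (2 * A)) * \<epsilon>\<^sup>2)"
    using IH by (rule ennreal_leI)
  finally show ?thesis by (simp add: L_def A_def A'_def)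
qed

end

theorem theorem5:
  fixes M :: "'a measure" and X :: "real \<Rightarrow> 'a \<Rightarrow> real"
    and e :: "nat \<Rightarrow> real \<Rightarrow> real" and lam :: "nat \<Rightarrow> real"
    and g :: "real \<Rightarrow> real \<Rightarrow> real" and c_g K_g :: real
  assumes P: "prob_space M"
    and X_joint: "(\<lambda>(t, \<omega>). X t \<omega>) \<in> borel_measurable (restrict_space lborel {0..1} \<Otimes>\<^sub>M M)"
    and X_meas: "\<And>t. t \<in> {0..1} \<Longrightarrow> X t \<in> borel_measurable M"
    and X_L2: "\<And>t. t \<in> {0..1} \<Longrightarrow> integrable M (\<lambda>\<omega>. (X t \<omega>)\<^sup>2)"
    and X_centered: "\<And>t. t \<in> {0..1} \<Longrightarrow> (\<integral>\<omega>. X t \<omega> \<partial>M) = 0"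
    and cov_cont: "continuous_on ({0..1} \<times> {0..1}) (\<lambda>(s, t). cov_fun M X s t)"
    and e_meas: "\<And>k. k \<ge> 1 \<Longrightarrow> e k \<in> borel_measurable lborel"
    and e_L2: "\<And>k. k \<ge> 1 \<Longrightarrow> set_integrable lborel {0..1::real} (\<lambda>t. (e k t)\<^sup>2)"
    and e_orthonormal: "\<And>j k. j \<ge> 1 \<Longrightarrow> k \<ge> 1 \<Longrightarrow>
        (LINT t:{0..1}|lborel. e j t * e k t) = (if j = k then 1 else 0)"
    and e_eigen: "\<And>k t. k \<ge> 1 \<Longrightarrow> t \<in> {0..1} \<Longrightarrow>
        (LINT s:{0..1}|lborel. cov_fun M X s t * e k s) = lam k * e k t"
    and lam_decr: "\<And>k. k \<ge> 1 \<Longrightarrow> lam (Suc k) \<le> lam k"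
    and lam_nonneg: "\<And>k. k \<ge> 1 \<Longrightarrow> lam k \<ge> 0"
    and KL_conv: "\<And>\<delta>. \<delta> > 0 \<Longrightarrow> \<exists>N. \<forall>n\<ge>N. \<forall>t\<in>{0..1}.
        (\<integral>\<omega>. (KL_trunc X e n t \<omega> - X t \<omega>)\<^sup>2 \<partial>M) \<le> \<delta>"
    and Z_indep: "prob_space.indep_vars M (\<lambda>_. borel) (KL_coeff X e) {1..}"
    and Z_mean: "\<And>k. k \<ge> 1 \<Longrightarrow> (\<integral>\<omega>. KL_coeff X e k \<omega> \<partial>M) = 0"
    and Z_subg: "\<And>k. k \<ge> 1 \<Longrightarrow> sub_gaussian M (KL_coeff X e k) 0 (sqrt (lam k))"
    and K_nonneg: "K_g \<ge> 0"
    and g_bound: "\<And>t x y. t \<in> {0..1} \<Longrightarrow>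
        g t x - g t y \<le> max \<bar>exp (c_g * x) - exp (c_g * y)\<bar> (K_g * \<bar>x - y\<bar>)"
  shows "\<exists>C2::real. \<forall>t\<in>{0..1}. \<forall>\<epsilon>\<in>{0<..1}.
    (\<integral>\<^sup>+\<omega>. ennreal ((g t (X t \<omega>) - g t (KL_trunc X e (trunc_index M X e \<epsilon>) t \<omega>))\<^sup>2) \<partial>M)
      \<le> ennreal (C2 * \<epsilon>\<^sup>2)"
proof -
  interpret K: KL M X e lam
    using P X_meas X_L2 cov_cont e_meas e_L2 e_orthonormal e_eigen KL_conv Z_indep Z_mean Z_subg
    by (simp add: KL_def KL_axioms_def)
  obtain B where B: "B \<ge> 0" "\<And>s t. s \<in> {0..1} \<Longrightarrow> t \<in> {0..1} \<Longrightarrow> \<bar>cov_fun M X s t\<bar> \<le> B"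
    using K.cov_bounded by metis
  have BX: "\<And>s. s \<in> {0..1} \<Longrightarrow> (\<integral>\<omega>. (X s \<omega>)\<^sup>2 \<partial>M) \<le> B"
    using B(2) by (force simp: K.cov_diag[symmetric])
  show ?thesis
  proof (intro exI ballI)
    fix t \<epsilon> :: real assume t: "t \<in> {0..1}" and ep: "\<epsilon> \<in> {0<..1}"
    show "(\<integral>\<^sup>+\<omega>. ennreal ((g t (X t \<omega>) - g t (KL_trunc X e (trunc_index M X e \<epsilon>) t \<omega>))\<^sup>2) \<partial>M)
      \<le> ennreal ((64 * c_g\<^sup>2 * (4 * exp (3 * (1 + 4 * \<bar>c_g\<bar>)\<^sup>2 / 2)) + c_g\<^sup>2 / 2 * exp (16 * c_g\<^sup>2 * (1 + B))
                  + 2 * K_g\<^sup>2 * (2 * exp (3 * (1 + 4 * \<bar>c_g\<bar>)\<^sup>2 / 2))) * \<epsilon>\<^sup>2)"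
      by (rule K.main_est[OF t _ _ K_nonneg BX g_bound[OF t]]) (use ep in auto)
  qed
qed

end
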